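(* When the characteristic functions range over $V_2$, there exists an irrevocable (non-wasteful) distribution policy whose competitive ratio with respect to greedy players is $\alpha=1$.
   Context: Players: a finite set $N=\{a_1,\dots,a_n\}$. A characteristic function is $v:2^N\to\mathbb{R}_{\ge 0}$ with $v(\emptyset)=0$. There are fixed, known constants $0<\mathsf{min}\le\mathsf{max}$ and every $v$ considered is monotone and bounded: $\mathsf{min}\le v(S)\le v(T)\le\mathsf{max}$ for all nonempty $S\subseteq T\subseteq N$. $V_2$ denotes the set of such $v$ with $2\mathsf{min}\le\mathsf{max}<3\mathsf{min}$. A coalition structure is a partition $C$ of $N$; its social welfare is $\mathsf{SW}(C\mid v)=\sum_{S\in C}v(S)$. Online process: an arrival order is a permutation $\pi=(\pi_1,\dots,\pi_n)$ of $N$; player $\pi_t$ arrives at time $t$. For $S\subseteq N$, $\pi_{|S}$ denotes the players of $S$ in the relative order of $\pi$; $\pi_{|S}$ is a prefix of $\pi_{|T}$ if $S\subseteq T$ and the players of $S$ are the first $|S|$ players of $\pi_{|T}$. Let $C^{t-1}$ be the coalition structure of players arrived before time $t$ ($C^0=\emptyset$). At time $t$, player $\pi_t$ either joins an existing coalition $S\in C^{t-1}$ or forms $\{\pi_t\}$ (choice $S=\emptyset$); decisions are never revised. A distribution policy $\varphi$ assigns to every $S\subseteq N$ and order $\pi_{|S}$ a vector $(\varphi_i(S,\pi_{|S}\mid v))_{i\in S}$ with $\sum_{i\in S}\varphi_i(S,\pi_{|S})=v(S)$ (non-wasteful); it may depend on the whole function $v$. It is irrevocable if for every $\pi$, every $S\subseteq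 T\subseteq N$ with $\pi_{|S}$ a prefix of $\pi_{|T}$ and every $i\in S$, $\varphi_i(S,\pi_{|S})\le\varphi_i(T,\pi_{|T})$. Greedy players: $\pi_t$ chooses $S^*\in\arg\max_{S\in C^{t-1}\cup\{\emptyset\}}\varphi_{\pi_t}(S\cup\{\pi_t\},\pi_{|S\cup\{\pi_t\}})$ (predetermined tie-breaking). $C_g(v,\pi\mid\varphi)$ is the final structure. The competitive ratio over a class is $\alpha=\inf_{v,\pi}\mathsf{SW}(C_g(v,\pi\mid\varphi))/\max_C\mathsf{SW}(C\mid v)$, over $v$ in the class and all arrival orders $\pi$. *)

theory Defs
  imports Complex_Main "HOL-Library.Disjoint_Sets" "HOL-Library.Sublist"
begin

text \<open>A distribution policy takes the characteristic function v, the arrival order of a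
  coalition S (the distinct list pi restricted to S, whose underlying set is S), and a
  player i, and returns the share of i.\<close>

type_synonym 'a charfun = "'a set \<Rightarrow> real"
type_synonym 'a policy = "'a charfun \<Rightarrow> 'a list \<Rightarrow> 'a \<Rightarrow> real"

definition bounded_monotone :: "'a set \<Rightarrow> real \<Rightarrow> real \<Rightarrow> 'a charfun \<Rightarrow> bool" where
  "bounded_monotone N mn mx v \<longleftrightarrow> v {} = 0 \<and>
     (\<forall>S T. S \<noteq> {} \<and> S \<subseteq> T \<and> T \<subseteq> N \<longrightarrow> mn \<le> v S \<and> v S \<le> v T \<and> v T \<le> mx)"

definition V2 :: "'a set \<Rightarrow> real \<Rightarrow> real \<Rightarrow> 'a charfun set" where
  "V2 N mn mx = {v. 0 < mn \<and> 2 * mn \<le> mx \<and> mx < 3 * mn \<and> bounded_monotone N mn mx v}"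

definition arrival_order :: "'a set \<Rightarrow> 'a list \<Rightarrow> bool" where
  "arrival_order N \<pi> \<longleftrightarrow> distinct \<pi> \<and> set \<pi> = N"

definition restr :: "'a list \<Rightarrow> 'a set \<Rightarrow> 'a list" where
  "restr \<pi> S = filter (\<lambda>x. x \<in> S) \<pi>"

definition non_wasteful :: "'a set \<Rightarrow> 'a charfun set \<Rightarrow> 'a policy \<Rightarrow> bool" where
  "non_wasteful N V \<phi> \<longleftrightarrow>
     (\<forall>v\<in>V. \<forall>\<sigma>. distinct \<sigma> \<and> set \<sigma> \<subseteq> N \<longrightarrow> (\<Sum>i\<in>set \<sigma>. \<phi> v \<sigma> i) = v (set \<sigma>))"

text \<open>Every distinct list over a subset of N arises as pi|T for some arrival order pi, and the
  prefix condition is exactly list prefix.\<close>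
definition irrevocable :: "'a set \<Rightarrow> 'a charfun set \<Rightarrow> 'a policy \<Rightarrow> bool" where
  "irrevocable N V \<phi> \<longleftrightarrow>
     (\<forall>v\<in>V. \<forall>\<pi>. arrival_order N \<pi> \<longrightarrow>
        (\<forall>S T. S \<subseteq> T \<and> T \<subseteq> N \<and> prefix (restr \<pi> S) (restr \<pi> T) \<longrightarrow>
           (\<forall>i\<in>S. \<phi> v (restr \<pi> S) i \<le> \<phi> v (restr \<pi> T) i)))"

text \<open>Greedy dynamics. greedy_reach phi v pi t C: C is a coalition structure of the first t
  players that can arise when each arriving player picks a coalition of C^(t-1) or the
  empty choice maximising its share; ties may be broken arbitrarily (every predetermined
  tie-breaking rule yields one of these runs).\<close>
inductive greedy_reach :: "'a policy \<Rightarrow> 'a charfun \<Rightarrow> 'a list \<Rightarrow> nat \<Rightarrow> 'a set set \<Rightarrow> bool"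
  for \<phi> v \<pi> where
  start: "greedy_reach \<phi> v \<pi> 0 {}"
| step: "\<lbrakk> greedy_reach \<phi> v \<pi> t C; t < length \<pi>; S \<in> insert {} C;
           \<forall>S'\<in>insert {} C. \<phi> v (restr \<pi> (insert (\<pi> ! t) S')) (\<pi> ! t)
                             \<le> \<phi> v (restr \<pi> (insert (\<pi> ! t) S)) (\<pi> ! t) \<rbrakk>
         \<Longrightarrow> greedy_reach \<phi> v \<pi> (Suc t) (insert (insert (\<pi> ! t) S) (C - {S}))"

definition greedy_outcome :: "'a policy \<Rightarrow> 'a charfun \<Rightarrow> 'a list \<Rightarrow> 'a set set \<Rightarrow> bool" where
  "greedy_outcome \<phi> v \<pi> C \<longleftrightarrow> greedy_reach \<phi> v \<pi> (length \<pi>) C"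

definition SW :: "'a charfun \<Rightarrow> 'a set set \<Rightarrow> real" where
  "SW v C = (\<Sum>S\<in>C. v S)"

definition opt_SW :: "'a set \<Rightarrow> 'a charfun \<Rightarrow> real" where
  "opt_SW N v = Max {SW v C | C. partition_on N C}"

end

theory Submission
  imports Defs
begin


definition optP :: "'a set \<Rightarrow> 'a charfun \<Rightarrow> 'a set set" where
  "optP N v = (SOME P. partition_on N P \<and> SW v P = opt_SW N v)"

lemma opt_exists:
  assumes "finite N"
  shows "partition_on N (optP N v) \<and> SW v (optP N v) = opt_SW N v"
    and "partition_on N C \<Longrightarrow> SW v C \<le> opt_SW N v"
proof -
  have eq: "{SW v C | C. partition_on N C} = SW v ` {C. partition_on N C}" by auto
  have fin: "finite {SW v C | C. partition_on N C}"
    unfolding eq using finitely_many_partition_on[OF assms] by simp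
  have ne: "{SW v C | C. partition_on N C} \<noteq> {}"
    using partition_on_singletons[of N] by auto
  have "opt_SW N v \<in> {SW v C | C. partition_on N C}"
    unfolding opt_SW_def using Max_in[OF fin ne] .
  then have "\<exists>P. partition_on N P \<and> SW v P = opt_SW N v" by auto
  then show "partition_on N (optP N v) \<and> SW v (optP N v) = opt_SW N v"
    unfolding optP_def by (rule someI_ex)
  show "partition_on N C \<Longrightarrow> SW v C \<le> opt_SW N v"
    unfolding opt_SW_def using fin by (intro Max_ge) auto
qed

lemma split_block:
  assumes "finite N" "partition_on N P" "B \<in> P" "2 \<le> card B"
  shows "partition_on N ((P - {B}) \<union> (\<lambda>x. {x}) ` B)"
    and "SW v ((P - {B}) \<union> (\<lambda>x. {x}) ` B) = SW v P - v B + (\<Sum>x\<in>B. v {x})"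
proof -
  have finP: "finite P" using finite_elements[OF assms(1,2)] .
  have BsubN: "B \<subseteq> N" using partition_onD1[OF assms(2)] assms(3) by blast
  have finB: "finite B" using finite_subset[OF BsubN assms(1)] .
  have disP: "disjnt p q" if "p \<in> P" "q \<in> P" "p \<noteq> q" for p q
    using pairwiseD[OF partition_onD2[OF assms(2)]] that by blast
  have nosing: "{x} \<notin> P" if "x \<in> B" for x
  proof
    assume xP: "{x} \<in> P"
    have "{x} = B"
    proof (rule ccontr)
      assume "{x} \<noteq> B"
      then have "disjnt {x} B" using disP xP assms(3) by blast
      then show False using that by (simp add: disjnt_def)
    qed
    then have "card B = 1" by auto
    with assms(4) show False by simp
  qed
  show "partition_on N ((P - {B}) \<union> (\<lambda>x. {x}) ` B)"
  proof (rule partition_onI)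
    show "\<Union> (P - {B} \<union> (\<lambda>x. {x}) ` B) = N"
      using partition_onD1[OF assms(2)] assms(3) by auto
    show "{} \<notin> P - {B} \<union> (\<lambda>x. {x}) ` B"
      using partition_onD3[OF assms(2)] by auto
    fix p q assume pq: "p \<in> P - {B} \<union> (\<lambda>x. {x}) ` B" "q \<in> P - {B} \<union> (\<lambda>x. {x}) ` B" "p \<noteq> q"
    show "disjnt p q"
    proof (cases "p \<in> P - {B}")
      case True
      show ?thesis
      proof (cases "q \<in> P - {B}")
        case True2: True
        then show ?thesis using True pq(3) disP by auto
      next
        case False
        then obtain x where "q = {x}" "x \<in> B" using pq(2) by auto
        then show ?thesis using disP[of p B] True assms(3) by (auto simp: disjnt_def)
      qed
    next
      case False
      then obtain x where x: "p = {x}" "x \<in> B" using pq(1) by auto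
      show ?thesis
      proof (cases "q \<in> P - {B}")
        case True
        then show ?thesis using disP[of q B] x assms(3) by (auto simp: disjnt_def)
      next
        case False
        then obtain y where "q = {y}" using pq(2) by auto
        then show ?thesis using x pq(3) by (auto simp: disjnt_def)
      qed
    qed
  qed
  have dis: "(P - {B}) \<inter> (\<lambda>x. {x}) ` B = {}" using nosing by auto
  have "SW v ((P - {B}) \<union> (\<lambda>x. {x}) ` B) = SW v (P - {B}) + SW v ((\<lambda>x. {x}) ` B)"
    unfolding SW_def using finP finB dis by (simp add: sum.union_disjoint)
  also have "SW v ((\<lambda>x. {x}) ` B) = (\<Sum>x\<in>B. v {x})"
    unfolding SW_def by (simp add: sum.reindex inj_on_def)
  also have "SW v (P - {B}) = SW v P - v B"
    unfolding SW_def using finP assms(3) by (simp add: sum_diff1)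
  finally show "SW v ((P - {B}) \<union> (\<lambda>x. {x}) ` B) = SW v P - v B + (\<Sum>x\<in>B. v {x})" .
qed

lemma optP_props:
  assumes "finite N" "v \<in> V2 N mn mx"
  shows "partition_on N (optP N v)"
    and "SW v (optP N v) = opt_SW N v"
    and "B \<in> optP N v \<Longrightarrow> card B \<le> 2"
    and "{a, b} \<in> optP N v \<Longrightarrow> a \<noteq> b \<Longrightarrow> v {a} + v {b} \<le> v {a, b}"
proof -
  let ?P = "optP N v"
  have P: "partition_on N ?P" and Pw: "SW v ?P = opt_SW N v" using opt_exists[OF assms(1)] by auto
  then show "partition_on N ?P" "SW v ?P = opt_SW N v" by auto
  have V: "0 < mn" "mx < 3 * mn" "bounded_monotone N mn mx v" using assms(2) unfolding V2_def by auto
  have le: "(\<Sum>x\<in>B. v {x}) \<le> v B" if "B \<in> ?P" "2 \<le> card B" for B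
    using split_block(2)[OF assms(1) P that, of v] opt_exists(2)[OF assms(1) split_block(1)[OF assms(1) P that], of v] Pw
    by linarith
  show "card B \<le> 2" if B: "B \<in> ?P" for B
  proof (rule ccontr)
    assume "\<not> card B \<le> 2"
    then have c: "3 \<le> card B" by simp
    have BN: "B \<subseteq> N" "B \<noteq> {}" using P B unfolding partition_on_def by auto
    have "(\<Sum>x\<in>B. mn) \<le> (\<Sum>x\<in>B. v {x})"
      using V(3) BN by (intro sum_mono) (auto simp: bounded_monotone_def)
    moreover have "(\<Sum>x\<in>B. mn) = card B * mn" by simp
    moreover have "real (card B) * mn \<ge> 3 * mn" using c V(1) by simp
    moreover have "v B \<le> mx" using V(3) BN unfolding bounded_monotone_def by blast
    ultimately show False using le[OF B] c V(2) by linarith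
  qed
  show "v {a} + v {b} \<le> v {a, b}" if "{a, b} \<in> ?P" "a \<noteq> b"
    using le[OF that(1)] that(2) by simp
qed



definition isp :: "'a set \<Rightarrow> 'a charfun \<Rightarrow> 'a list \<Rightarrow> bool" where
  "isp N v \<sigma> \<longleftrightarrow> 2 \<le> length \<sigma> \<and> {\<sigma>!0, \<sigma>!1} \<in> optP N v"

definition pol :: "'a set \<Rightarrow> 'a policy" where
  "pol N v \<sigma> x = (if isp N v \<sigma> \<and> x = \<sigma>!1 then v {\<sigma>!0, \<sigma>!1} - v {\<sigma>!0}
     else if \<sigma> \<noteq> [] \<and> x = hd \<sigma> then v (set \<sigma>) - (if isp N v \<sigma> then v {\<sigma>!0, \<sigma>!1} - v {\<sigma>!0} else 0)
     else 0)"

lemma pol_single: "pol N v [k] k = v {k}"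
  by (simp add: pol_def isp_def)

lemma pol_sum:
  assumes "distinct \<sigma>" "v {} = 0"
  shows "(\<Sum>i\<in>set \<sigma>. pol N v \<sigma> i) = v (set \<sigma>)"
proof (cases \<sigma>)
  case Nil
  then show ?thesis using assms by simp
next
  case (Cons a r)
  show ?thesis
  proof (cases r)
    case Nil
    then show ?thesis using Cons by (simp add: pol_def isp_def)
  next
    case (Cons b r')
    have s: "\<sigma> = a # b # r'" using Cons \<open>\<sigma> = a # r\<close> by simp
    have d: "a \<noteq> b" "a \<notin> set r'" "b \<notin> set r'" using assms(1) s by auto
    have z: "(\<Sum>i\<in>set r'. pol N v (a # b # r') i) = 0"
      by (rule sum.neutral) (use d in \<open>auto simp: pol_def\<close>)
    have "(\<Sum>i\<in>set (a # b # r'). pol N v (a # b # r') i)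
        = pol N v (a # b # r') a + pol N v (a # b # r') b + (\<Sum>i\<in>set r'. pol N v (a # b # r') i)"
      using d by simp
    also have "\<dots> = v (set (a # b # r'))" using z d by (auto simp: pol_def)
    finally show ?thesis using s by simp
  qed
qed

lemma pol_mono:
  assumes "prefix \<sigma> \<tau>" "distinct \<tau>" "i \<in> set \<sigma>" "set \<tau> \<subseteq> N" "bounded_monotone N mn mx v"
  shows "pol N v \<sigma> i \<le> pol N v \<tau> i"
proof -
  obtain \<rho> where \<tau>: "\<tau> = \<sigma> @ \<rho>" using assms(1) prefixE by blast
  have mono: "v S \<le> v T" if "S \<noteq> {}" "S \<subseteq> T" "T \<subseteq> N" for S T
    using assms(5) that unfolding bounded_monotone_def by blast
  obtain a r where s: "\<sigma> = a # r" using assms(3) by (cases \<sigma>) auto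
  show ?thesis
  proof (cases r)
    case Nil
    then have i: "i = a" using assms(3) s by simp
    have lhs: "pol N v \<sigma> i = v {a}" using s Nil i by (simp add: pol_def isp_def)
    show ?thesis
    proof (cases \<rho>)
      case Nil
      then show ?thesis using \<tau> by simp
    next
      case (Cons b r2)
      have t2: "\<tau> = a # b # r2" using \<tau> s \<open>r = []\<close> Cons by simp
      have ab: "a \<noteq> b" using assms(2) t2 by simp
      have m1: "v {a, b} \<le> v (set \<tau>)" using mono[of "{a,b}" "set \<tau>"] t2 assms(4) by auto
      have m2: "v {a} \<le> v (set \<tau>)" using mono[of "{a}" "set \<tau>"] t2 assms(4) by auto
      have "pol N v (a # b # r2) a = v (set (a # b # r2)) - (if isp N v (a # b # r2) then v {a, b} - v {a} else 0)"
        using ab by (simp add: pol_def)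
      then have "pol N v \<tau> i = v (set \<tau>) - (if isp N v \<tau> then v {a, b} - v {a} else 0)"
        using t2 i by simp
      then show ?thesis using lhs m1 m2 by auto
    qed
  next
    case (Cons b r')
    have s2: "\<sigma> = a # b # r'" using s Cons by simp
    have t2: "\<tau> = a # b # (r' @ \<rho>)" using \<tau> s2 by simp
    have ab: "a \<noteq> b" using assms(2) t2 by simp
    have isp_eq: "isp N v (a # b # (r' @ \<rho>)) = isp N v (a # b # r')" by (simp add: isp_def)
    have m: "v (set \<sigma>) \<le> v (set \<tau>)" using mono[of "set \<sigma>" "set \<tau>"] \<tau> assms(4) s2 by auto
    show ?thesis
    proof (cases "i = a")
      case True
      have "pol N v (a # b # r') a \<le> pol N v (a # b # (r' @ \<rho>)) a"
        using ab m s2 t2 isp_eq by (simp add: pol_def)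
      then show ?thesis using True s2 t2 by simp
    next
      case False
      have "pol N v (a # b # r') i \<le> pol N v (a # b # (r' @ \<rho>)) i"
        using False isp_eq by (simp add: pol_def)
      then show ?thesis using s2 t2 by simp
    qed
  qed
qed

lemma pol_last:
  assumes "distinct (\<sigma> @ [k])" "\<sigma> \<noteq> []"
  shows "pol N v (\<sigma> @ [k]) k = (if \<sigma> = [hd \<sigma>] \<and> {hd \<sigma>, k} \<in> optP N v then v {hd \<sigma>, k} - v {hd \<sigma>} else 0)"
proof -
  obtain a r where s: "\<sigma> = a # r" using assms(2) by (cases \<sigma>) auto
  show ?thesis
  proof (cases r)
    case Nil
    then show ?thesis using s assms(1) by (simp add: pol_def isp_def)
  next
    case (Cons b r')
    then show ?thesis using s assms(1) by (auto simp: pol_def isp_def)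
  qed
qed

lemma nonwasteful_pol:
  "non_wasteful N (V2 N mn mx) (pol N)"
  unfolding non_wasteful_def
proof (intro ballI allI impI)
  fix v \<sigma> assume "v \<in> V2 N mn mx" "distinct \<sigma> \<and> set \<sigma> \<subseteq> N"
  then have "v {} = 0" "distinct \<sigma>" unfolding V2_def bounded_monotone_def by auto
  then show "(\<Sum>i\<in>set \<sigma>. pol N v \<sigma> i) = v (set \<sigma>)" by (rule pol_sum[rotated])
qed

lemma irrevocable_pol:
  "irrevocable N (V2 N mn mx) (pol N)"
  unfolding irrevocable_def
proof (intro ballI allI impI)
  fix v \<pi> S T i
  assume v: "v \<in> V2 N mn mx" and ao: "arrival_order N \<pi>"
    and st: "S \<subseteq> T \<and> T \<subseteq> N \<and> prefix (restr \<pi> S) (restr \<pi> T)" and i: "i \<in> S"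
  have d: "distinct \<pi>" "set \<pi> = N" using ao unfolding arrival_order_def by auto
  have bm: "bounded_monotone N mn mx v" using v unfolding V2_def by auto
  show "pol N v (restr \<pi> S) i \<le> pol N v (restr \<pi> T) i"
  proof (rule pol_mono[OF _ _ _ _ bm])
    show "prefix (restr \<pi> S) (restr \<pi> T)" using st by blast
    show "distinct (restr \<pi> T)" using d unfolding restr_def by simp
    show "i \<in> set (restr \<pi> S)" using d i st unfolding restr_def by auto
    show "set (restr \<pi> T) \<subseteq> N" using d unfolding restr_def by auto
  qed
qed



lemma nth_notin_take: "distinct \<pi> \<Longrightarrow> t < length \<pi> \<Longrightarrow> \<pi> ! t \<notin> set (take t \<pi>)"
  by (auto simp: in_set_conv_nth nth_eq_iff_index_eq)

lemma restr_insert_last: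
  assumes "distinct \<pi>" "t < length \<pi>" "S \<subseteq> set (take t \<pi>)"
  shows "restr \<pi> (insert (\<pi> ! t) S) = restr (take t \<pi>) S @ [\<pi> ! t]"
proof -
  define xs where "xs = take t \<pi>"
  define ys where "ys = drop (Suc t) \<pi>"
  define k where "k = \<pi> ! t"
  have p: "\<pi> = xs @ k # ys" unfolding xs_def ys_def k_def using assms(2) by (simp add: id_take_nth_drop)
  have d: "distinct (xs @ k # ys)" using assms(1) p by simp
  have f1: "filter (\<lambda>x. x \<in> insert k S) xs = filter (\<lambda>x. x \<in> S) xs"
    using d by (intro filter_cong) auto
  have f2: "filter (\<lambda>x. x \<in> insert k S) ys = []"
    using d assms(3) unfolding xs_def[symmetric] by (auto simp: filter_empty_conv)
  have "restr \<pi> (insert k S) = filter (\<lambda>x. x \<in> insert k S) (xs @ k # ys)"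
    unfolding restr_def using p by simp
  also have "\<dots> = filter (\<lambda>x. x \<in> S) xs @ [k]" using f1 f2 by simp
  finally show ?thesis unfolding restr_def xs_def k_def .
qed

lemma distinct_single:
  assumes "distinct xs" "set xs = {j}" shows "xs = [j]"
proof -
  have "length xs = 1" using distinct_card[OF assms(1)] assms(2) by simp
  then obtain a where "xs = [a]" by (auto simp: length_Suc_conv)
  then show ?thesis using assms(2) by simp
qed

lemma card2_cases:
  assumes "finite B" "k \<in> B" "card B \<le> 2"
  shows "B = {k} \<or> (\<exists>j. j \<noteq> k \<and> B = {k, j})"
proof (cases "B - {k} = {}")
  case True
  then show ?thesis using assms(2) by auto
next
  case False
  then obtain j where j: "j \<in> B - {k}" by auto
  have c1: "card (B - {k}) \<le> 1" using assms by (simp add: card_Diff_singleton)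
  have "B - {k} \<subseteq> {j}"
  proof
    fix l assume l: "l \<in> B - {k}"
    show "l \<in> {j}"
    proof (rule ccontr)
      assume lj: "l \<notin> {j}"
      then have "{j, l} \<subseteq> B - {k}" using j l by auto
      then have "card {j, l} \<le> card (B - {k})" using assms(1) by (intro card_mono) auto
      moreover have "card {j, l} = 2" using lj by auto
      ultimately show False using c1 by simp
    qed
  qed
  then have "B = {k, j}" using assms(2) j by auto
  then show ?thesis using j by auto
qed



lemma greedy_inv:
  assumes fin: "finite N" and vV: "v \<in> V2 N mn mx" and ao: "arrival_order N \<pi>"
    and gr: "greedy_reach (pol N) v \<pi> t C"
  shows "t \<le> length \<pi> \<and> finite C \<and> \<Union>C = set (take t \<pi>) \<and>
         (\<forall>B\<in>C. (\<exists>x. B = {x}) \<or> B \<in> optP N v) \<and>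
         (\<forall>B1\<in>C. \<forall>B2\<in>C. B1 \<noteq> B2 \<longrightarrow> B1 \<inter> B2 = {}) \<and>
         SW v C = (\<Sum>B\<in>optP N v. v (B \<inter> set (take t \<pi>)))"
  using gr
proof (induction rule: greedy_reach.induct)
  case start
  have "v {} = 0" using vV unfolding V2_def bounded_monotone_def by auto
  then show ?case by (simp add: SW_def)
next
  case (step t C S)
  let ?P = "optP N v"
  define A where "A = set (take t \<pi>)"
  define k where "k = \<pi> ! t"
  from step.IH have tl: "t \<le> length \<pi>" and finC: "finite C" and UC: "\<Union>C = A"
    and str: "\<forall>B\<in>C. (\<exists>x. B = {x}) \<or> B \<in> ?P"
    and dj: "\<forall>B1\<in>C. \<forall>B2\<in>C. B1 \<noteq> B2 \<longrightarrow> B1 \<inter> B2 = {}"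
    and sw: "SW v C = (\<Sum>B\<in>?P. v (B \<inter> A))"
    unfolding A_def by auto
  have tlt: "t < length \<pi>" using step.hyps(2) .
  have dist: "distinct \<pi>" and setpi: "set \<pi> = N" using ao unfolding arrival_order_def by auto
  have kA: "k \<notin> A" unfolding A_def k_def using nth_notin_take[OF dist tlt] .
  have kN: "k \<in> N" using setpi tlt unfolding k_def by auto
  have A': "set (take (Suc t) \<pi>) = insert k A" unfolding A_def k_def using tlt
    by (simp add: take_Suc_conv_app_nth)
  have V: "0 < mn" and bm: "bounded_monotone N mn mx v" using vV unfolding V2_def by auto
  have v0: "v {} = 0" using bm unfolding bounded_monotone_def by auto
  have vk: "mn \<le> v {k}" using bm kN unfolding bounded_monotone_def by auto
  have P: "partition_on N ?P" using optP_props(1)[OF fin vV] .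
  have finP: "finite ?P" using finite_elements[OF fin P] .
  have Pc: "card B \<le> 2" if "B \<in> ?P" for B using optP_props(3)[OF fin vV that] .
  have Popt: "v {a} + v {b} \<le> v {a, b}" if "{a, b} \<in> ?P" "a \<noteq> b" for a b
    using optP_props(4)[OF fin vV that] .
  have Pdis: "B1 = B2" if "B1 \<in> ?P" "B2 \<in> ?P" "x \<in> B1" "x \<in> B2" for B1 B2 x
  proof (rule ccontr)
    assume "B1 \<noteq> B2"
    then have "disjnt B1 B2" using pairwiseD[OF partition_onD2[OF P]] that(1,2) by blast
    then show False using that(3,4) by (simp add: disjnt_def disjoint_iff)
  qed
  have Pne: "{} \<notin> ?P" using partition_onD3[OF P] .
  have PN: "B \<subseteq> N" if "B \<in> ?P" for B using partition_onD1[OF P] that by auto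
  obtain Bk where Bk: "Bk \<in> ?P" "k \<in> Bk" using partition_onD1[OF P] kN by auto
  have finBk: "finite Bk" using PN[OF Bk(1)] fin finite_subset by auto
  have Bkc: "Bk = {k} \<or> (\<exists>j. j \<noteq> k \<and> Bk = {k, j})"
    using card2_cases[OF finBk Bk(2) Pc[OF Bk(1)]] .
  define share where "share S' = pol N v (restr \<pi> (insert k S')) k" for S'
  have hmax: "\<forall>S'\<in>insert {} C. share S' \<le> share S"
    using step.hyps(4) unfolding share_def k_def .
  have SC: "S \<in> insert {} C" using step.hyps(3) .
  have subA: "B \<subseteq> A" if "B \<in> C" for B using UC that by auto
  have restr_eq: "restr \<pi> (insert k S') = restr (take t \<pi>) S' @ [k]" if "S' \<subseteq> A" for S'
    using restr_insert_last[OF dist tlt, of S'] that unfolding A_def k_def by auto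
  have setr: "set (restr (take t \<pi>) S') = S'" if "S' \<subseteq> A" for S'
    using that unfolding restr_def A_def by auto
  have distr: "distinct (restr (take t \<pi>) S' @ [k])" if "S' \<subseteq> A" for S'
    using dist setr[OF that] kA that unfolding restr_def by auto
  have sh0: "share {} = v {k}"
    unfolding share_def using restr_eq[of "{}"] pol_single[of N v k] by (simp add: restr_def)
  have sh1: "share {j} = v {j, k} - v {j}" if "j \<in> A" "{j, k} \<in> ?P" for j
  proof -
    have sj: "{j} \<subseteq> A" using that by auto
    have dj1: "distinct (restr (take t \<pi>) {j})" using dist unfolding restr_def by simp
    have l: "restr (take t \<pi>) {j} = [j]"
      using distinct_single[OF dj1 setr[OF sj]] .
    show ?thesis unfolding share_def restr_eq[OF sj]
      using pol_last[where N=N and v=v, OF distr[OF sj]] l that(2) by simp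
  qed
  have sh2: "share S' = 0" if "S' \<in> C" "S' \<noteq> {}" "\<not> (\<exists>j. S' = {j} \<and> {j, k} \<in> ?P)" for S'
  proof -
    have sA: "S' \<subseteq> A" using subA that(1) .
    have ne: "restr (take t \<pi>) S' \<noteq> []" using setr[OF sA] that(2) by auto
    have nc: "\<not> (restr (take t \<pi>) S' = [hd (restr (take t \<pi>) S')] \<and> {hd (restr (take t \<pi>) S'), k} \<in> ?P)"
    proof
      assume h: "restr (take t \<pi>) S' = [hd (restr (take t \<pi>) S')] \<and> {hd (restr (take t \<pi>) S'), k} \<in> ?P"
      then have "S' = {hd (restr (take t \<pi>) S')}" using setr[OF sA] by (metis list.set(1) list.set(2))
      then show False using that(3) h by blast
    qed
    have "pol N v (restr (take t \<pi>) S' @ [k]) k = 0"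
      using pol_last[where N=N and v=v, OF distr[OF sA] ne] by (simp only: if_not_P[OF nc])
    then show ?thesis unfolding share_def restr_eq[OF sA] .
  qed
  have Scase: "S = {} \<or> (\<exists>j. S = {j} \<and> {j, k} \<in> ?P)"
  proof (rule ccontr)
    assume h: "\<not> (S = {} \<or> (\<exists>j. S = {j} \<and> {j, k} \<in> ?P))"
    then have "S \<in> C" using SC by auto
    then have "share S = 0" using sh2 h by blast
    moreover have "share {} \<le> share S" using hmax by auto
    ultimately show False using sh0 vk V by linarith
  qed
  have eC: "{} \<notin> C" using str Pne by auto
  have singC: "{j} \<in> C" if jA0: "j \<in> A" and jk0: "{j, k} \<in> ?P" for j
  proof -
    obtain B where B: "B \<in> C" "j \<in> B" using UC jA0 by auto
    show ?thesis
    proof (cases "\<exists>x. B = {x}")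
      case True
      then show ?thesis using B by auto
    next
      case False
      then have "B \<in> ?P" using str B(1) by auto
      then have "B = {j, k}" using Pdis[OF _ jk0 B(2)] by auto
      then show ?thesis using subA[OF B(1)] kA by auto
    qed
  qed
  have sumchange: "(\<Sum>B\<in>?P. v (B \<inter> insert k A)) = (\<Sum>B\<in>?P. v (B \<inter> A)) + (v (Bk \<inter> insert k A) - v (Bk \<inter> A))"
  proof -
    have eq: "(\<Sum>B\<in>?P - {Bk}. v (B \<inter> insert k A)) = (\<Sum>B\<in>?P - {Bk}. v (B \<inter> A))"
    proof (rule sum.cong)
      fix B assume B: "B \<in> ?P - {Bk}"
      then have "k \<notin> B" using Pdis[of B Bk k] Bk by auto
      then show "v (B \<inter> insert k A) = v (B \<inter> A)" by (metis Int_insert_right)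
    qed simp
    show ?thesis
      using sum.remove[OF finP Bk(1), of "\<lambda>B. v (B \<inter> insert k A)"]
        sum.remove[OF finP Bk(1), of "\<lambda>B. v (B \<inter> A)"] eq by simp
  qed
  have goalform: "Suc t \<le> length \<pi> \<and> finite C' \<and> \<Union>C' = insert k A \<and>
         (\<forall>B\<in>C'. (\<exists>x. B = {x}) \<or> B \<in> ?P) \<and>
         (\<forall>B1\<in>C'. \<forall>B2\<in>C'. B1 \<noteq> B2 \<longrightarrow> B1 \<inter> B2 = {}) \<and>
         SW v C' = (\<Sum>B\<in>?P. v (B \<inter> insert k A))"
    if C': "C' = insert (insert k S) (C - {S})" for C'
  proof (cases "S = {}")
    case True
    have C'e: "C' = insert {k} C" using C' True eC by auto
    have knC: "{k} \<notin> C" using UC kA by auto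
    have d1: "\<forall>B\<in>C. B \<inter> {k} = {} \<and> {k} \<inter> B = {}" using subA kA by auto
    have diff: "v (Bk \<inter> insert k A) - v (Bk \<inter> A) = v {k}"
    proof (cases "Bk = {k}")
      case True
      then show ?thesis using kA v0 by simp
    next
      case False
      then obtain j where j: "j \<noteq> k" "Bk = {k, j}" using Bkc by auto
      have jkP: "{j, k} \<in> ?P" using j Bk(1) by (simp add: insert_commute)
      show ?thesis
      proof (cases "j \<in> A")
        case True
        have "{j} \<in> C" using singC[OF True jkP] .
        then have "share {j} \<le> share {}" using hmax \<open>S = {}\<close> by auto
        then have le1: "v {j, k} - v {j} \<le> v {k}" using sh1[OF True jkP] sh0 by simp
        have le2: "v {j} + v {k} \<le> v {j, k}" using Popt[OF jkP j(1)] .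
        have "Bk \<inter> insert k A = {j, k}" "Bk \<inter> A = {j}" using j True kA by auto
        then show ?thesis using le1 le2 by simp
      next
        case False
        have "Bk \<inter> insert k A = {k}" "Bk \<inter> A = {}" using j False kA by auto
        then show ?thesis using v0 by simp
      qed
    qed
    have "SW v C' = v {k} + SW v C" unfolding C'e SW_def using finC knC by simp
    then have swe: "SW v C' = (\<Sum>B\<in>?P. v (B \<inter> insert k A))" using sw sumchange diff by simp
    show ?thesis using C'e tlt finC UC str dj d1 swe by auto
  next
    case False
    then obtain j where j: "S = {j}" "{j, k} \<in> ?P" using Scase by auto
    have SinC: "S \<in> C" using SC False by auto
    have jA: "j \<in> A" using subA[OF SinC] j by auto
    have jk: "j \<noteq> k" using jA kA by auto
    have C'e: "C' = insert {k, j} (C - {{j}})" using C' j by auto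
    have Bke: "Bk = {j, k}" using Pdis[OF Bk(1) j(2) Bk(2)] by simp
    have others: "\<forall>B\<in>C - {{j}}. j \<notin> B \<and> k \<notin> B"
    proof
      fix B assume B: "B \<in> C - {{j}}"
      then have "B \<inter> {j} = {}" using dj SinC j by auto
      then show "j \<notin> B \<and> k \<notin> B" using subA B kA by auto
    qed
    have U': "\<Union>(C - {{j}}) = A - {j}"
    proof
      show "\<Union>(C - {{j}}) \<subseteq> A - {j}" using others subA by auto
      show "A - {j} \<subseteq> \<Union>(C - {{j}})"
      proof
        fix a assume a: "a \<in> A - {j}"
        then obtain B where "B \<in> C" "a \<in> B" using UC by auto
        then show "a \<in> \<Union>(C - {{j}})" using a by auto
      qed
    qed
    have kjn: "{k, j} \<notin> C - {{j}}" using others by auto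
    have "SW v C' = v {k, j} + SW v (C - {{j}})" unfolding C'e SW_def using finC kjn by simp
    also have "SW v (C - {{j}}) = SW v C - v {j}" unfolding SW_def using finC SinC j by (simp add: sum_diff1)
    finally have sw1: "SW v C' = v {k, j} + SW v C - v {j}" by simp
    have "Bk \<inter> insert k A = {k, j}" "Bk \<inter> A = {j}" using Bke jA kA by auto
    then have swe: "SW v C' = (\<Sum>B\<in>?P. v (B \<inter> insert k A))" using sw1 sw sumchange by simp
    have strn: "\<forall>B\<in>C'. (\<exists>x. B = {x}) \<or> B \<in> ?P" using C'e str j(2) by (auto simp: insert_commute)
    have djn: "\<forall>B1\<in>C'. \<forall>B2\<in>C'. B1 \<noteq> B2 \<longrightarrow> B1 \<inter> B2 = {}"
    proof (intro ballI impI)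
      fix B1 B2 assume b: "B1 \<in> C'" "B2 \<in> C'" "B1 \<noteq> B2"
      show "B1 \<inter> B2 = {}"
      proof (cases "B1 = {k, j}")
        case True
        then have "B2 \<in> C - {{j}}" using b C'e by auto
        then show ?thesis using True others by auto
      next
        case False
        then have b1: "B1 \<in> C - {{j}}" using b C'e by auto
        show ?thesis
        proof (cases "B2 = {k, j}")
          case True
          then show ?thesis using b1 others by auto
        next
          case False
          then have "B2 \<in> C - {{j}}" using b C'e by auto
          then show ?thesis using b1 b(3) dj by auto
        qed
      qed
    qed
    have Un: "\<Union>C' = insert k A" using C'e U' jA by auto
    show ?thesis using tlt finC C'e Un strn djn swe by auto
  qed
  show ?case
    unfolding A' k_def[symmetric]
    using goalform[OF refl] .
qed


theorem theorem3:
  fixes N :: "'a set" and mn mx :: real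
  assumes "finite N" and "0 < mn" and "2 * mn \<le> mx" and "mx < 3 * mn"
  shows "\<exists>\<phi> :: 'a policy.
           non_wasteful N (V2 N mn mx) \<phi> \<and> irrevocable N (V2 N mn mx) \<phi> \<and>
           (\<forall>v\<in>V2 N mn mx. \<forall>\<pi> C. arrival_order N \<pi> \<and> greedy_outcome \<phi> v \<pi> C
              \<longrightarrow> SW v C = opt_SW N v)"
proof -
  have "\<forall>v\<in>V2 N mn mx. \<forall>\<pi> C. arrival_order N \<pi> \<and> greedy_outcome (pol N) v \<pi> C
              \<longrightarrow> SW v C = opt_SW N v"
  proof (intro ballI allI impI)
    fix v \<pi> C
    assume v: "v \<in> V2 N mn mx" and h: "arrival_order N \<pi> \<and> greedy_outcome (pol N) v \<pi> C"
    have ao: "arrival_order N \<pi>" using h by simp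
    have gr: "greedy_reach (pol N) v \<pi> (length \<pi>) C" using h unfolding greedy_outcome_def by simp
    have setpi: "set \<pi> = N" using ao unfolding arrival_order_def by simp
    have P: "partition_on N (optP N v)" using optP_props(1)[OF assms(1) v] .
    have "SW v C = (\<Sum>B\<in>optP N v. v (B \<inter> set (take (length \<pi>) \<pi>)))"
      using greedy_inv[OF assms(1) v ao gr] by blast
    also have "\<dots> = (\<Sum>B\<in>optP N v. v B)"
    proof (rule sum.cong)
      fix B assume "B \<in> optP N v"
      then have "B \<subseteq> N" using partition_onD1[OF P] by auto
      then show "v (B \<inter> set (take (length \<pi>) \<pi>)) = v B" using setpi by (simp add: Int_absorb2)
    qed simp
    also have "\<dots> = opt_SW N v" using optP_props(2)[OF assms(1) v] unfolding SW_def .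
    finally show "SW v C = opt_SW N v" .
  qed
  then show ?thesis using nonwasteful_pol[of N mn mx] irrevocable_pol[of N mn mx] by blast
qed

end
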